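(* Let $1\le K\le N$. Then $$\mathcal{C}_{N,K}=\mathrm{conv}\left\{R_\sigma\left(\mathcal{C}_{K,K}\oplus 0^{N-K}\right)\ :\ \sigma\in S\right\},$$ where $S\subseteq S_N$ is the set of permutations $\sigma$ of $\{1,\dots,N\}$ for which there exists a subset $\{g_1,\dots,g_K\}\subseteq\{1,\dots,N\}$ with $\sigma(i)=g_i$ for all $i=1,\dots,K$.
   Context: A behavior on $N$ input bits is a family $P=(P(a|\mathbf{x}))_{a\in\{0,1\},\mathbf{x}\in\{0,1\}^N}$ with $P(a|\mathbf{x})\ge0$ and $P(0|\mathbf{x})+P(1|\mathbf{x})=1$; the set of all behaviors is $\mathcal{L}_N\subset\mathbb{R}^{2^{N+1}}$. $\mathcal{C}_{N,K}$ is the set of $P\in\mathcal{L}_N$ for which there exist non-negative weights $q_{j_1\cdots j_K}$ summing to one, indexed by $K$-tuples of pairwise distinct indices in $\{1,\dots,N\}$, and conditional distributions $P(a|x_{j_1}\cdots x_{j_K})$ depending only on $x_{j_1},\dots,x_{j_K}$, with $P(a|\mathbf{x})=\sum q_{j_1\cdots j_K}P(a|x_{j_1}\cdots x_{j_K})$. $\mathcal{C}_{K,K}\oplus 0^{N-K}$ denotes the copy of $\mathcal{C}_{K,K}=\mathcal{L}_K$ embedded in $\mathcal{L}_N$, i.e. the set of behaviors $P\in\mathcal{L}_N$ such that $P(a|\mathbf{x})$ depends only on $x_1,\dots,x_K$ (a hypercube whose vertices are the deterministic behaviors $\delta_{a,f(\mathbf{x})}$ with $f$ depending only on $x_1,\dots,x_K$).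 For $\sigma\in S_N$, $R_\sigma$ is the linear map on behaviors given by $(R_\sigma P)(a|x_1,\dots,x_N)=P(a|x_{\sigma(1)},\dots,x_{\sigma(N)})$. $\mathrm{conv}$ denotes convex hull. *)

theory Defs
  imports "HOL-Analysis.Analysis"
begin

text \<open>Behaviors on N input bits are modelled as functions P a x with a :: bool (output)
 and x :: nat \<Rightarrow> bool (input string; only bits 1..N are used). To identify
 behaviors with vectors in R^(2^(N+1)), inputs are restricted to those vanishing outside
 {1..N} and behaviors are set to 0 on all other inputs.\<close>

definition inputs :: "nat \<Rightarrow> (nat \<Rightarrow> bool) set" where
  "inputs N = {x. \<forall>i. x i \<longrightarrow> i \<in> {1..N}}"

definition behaviors :: "nat \<Rightarrow> (bool \<Rightarrow> (nat \<Rightarrow> bool) \<Rightarrow> real) set" where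
  "behaviors N = {P. (\<forall>a x. x \<notin> inputs N \<longrightarrow> P a x = 0)
                   \<and> (\<forall>a. \<forall>x\<in>inputs N. 0 \<le> P a x)
                   \<and> (\<forall>x\<in>inputs N. P False x + P True x = 1)}"

definition tuples :: "nat \<Rightarrow> nat \<Rightarrow> (nat \<Rightarrow> nat) set" where
  "tuples N K = {j. j \<in> {1..K} \<rightarrow>\<^sub>E {1..N} \<and> inj_on j {1..K}}"

text \<open>The set C_{N,K}: Q j is the conditional distribution P(a | x_{j_1} ... x_{j_K}),
 given as a function of the list of the K relevant bits.\<close>
definition CNK :: "nat \<Rightarrow> nat \<Rightarrow> (bool \<Rightarrow> (nat \<Rightarrow> bool) \<Rightarrow> real) set" where
  "CNK N K = {P \<in> behaviors N. \<exists>(q :: (nat \<Rightarrow> nat) \<Rightarrow> real)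
        (Q :: (nat \<Rightarrow> nat) \<Rightarrow> bool \<Rightarrow> bool list \<Rightarrow> real).
      (\<forall>j\<in>tuples N K. 0 \<le> q j) \<and> (\<Sum>j\<in>tuples N K. q j) = 1
    \<and> (\<forall>j\<in>tuples N K. \<forall>ys. length ys = K \<longrightarrow>
          (\<forall>a. 0 \<le> Q j a ys) \<and> Q j False ys + Q j True ys = 1)
    \<and> (\<forall>a. \<forall>x\<in>inputs N.
          P a x = (\<Sum>j\<in>tuples N K. q j * Q j a (map (x \<circ> j) [1..<Suc K])))}"

text \<open>C_{K,K} (+) 0^{N-K}: behaviors in L_N depending only on x_1..x_K.\<close>
definition embedded :: "nat \<Rightarrow> nat \<Rightarrow> (bool \<Rightarrow> (nat \<Rightarrow> bool) \<Rightarrow> real) set" where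
  "embedded N K = {P \<in> behaviors N. \<forall>a. \<forall>x\<in>inputs N. \<forall>y\<in>inputs N.
       (\<forall>i\<in>{1..K}. x i = y i) \<longrightarrow> P a x = P a y}"

definition Rperm :: "(nat \<Rightarrow> nat) \<Rightarrow> (bool \<Rightarrow> (nat \<Rightarrow> bool) \<Rightarrow> real) \<Rightarrow> (bool \<Rightarrow> (nat \<Rightarrow> bool) \<Rightarrow> real)" where
  "Rperm \<sigma> P = (\<lambda>a x. P a (x \<circ> \<sigma>))"

text \<open>Convex hull: the set of all finite convex combinations (the function space has no
 real_vector instance in the library, so this is written out).\<close>
definition conv :: "(bool \<Rightarrow> (nat \<Rightarrow> bool) \<Rightarrow> real) set \<Rightarrow> (bool \<Rightarrow> (nat \<Rightarrow> bool) \<Rightarrow> real) set" where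
  "conv A = {P. \<exists>(n::nat) (c :: nat \<Rightarrow> real) Ps.
      (\<forall>i<n. 0 \<le> c i \<and> Ps i \<in> A) \<and> (\<Sum>i<n. c i) = 1
    \<and> P = (\<lambda>a x. \<Sum>i<n. c i * Ps i a x)}"

end

theory Submission
  imports Defs
begin
declare upt_Suc[simp del]

lemma inputs_perm:
  assumes "\<sigma> permutes {1..N}"
  shows "(x \<circ> \<sigma> \<in> inputs N) \<longleftrightarrow> (x \<in> inputs N)"
proof
  assume h: "x \<circ> \<sigma> \<in> inputs N"
  show "x \<in> inputs N" unfolding inputs_def
  proof (intro CollectI allI impI)
    fix i assume "x i"
    hence "(x \<circ> \<sigma>) (inv \<sigma> i)" using permutes_inverses(1)[OF assms] by simp
    hence "inv \<sigma> i \<in> {1..N}" using h unfolding inputs_def by blast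
    thus "i \<in> {1..N}" using permutes_in_image[OF permutes_inv[OF assms]] by blast
  qed
next
  assume h: "x \<in> inputs N"
  show "x \<circ> \<sigma> \<in> inputs N" unfolding inputs_def
  proof (intro CollectI allI impI)
    fix i assume "(x \<circ> \<sigma>) i"
    hence "\<sigma> i \<in> {1..N}" using h unfolding inputs_def by auto
    thus "i \<in> {1..N}" using permutes_in_image[OF assms] by blast
  qed
qed

lemma extend_perm:
  assumes "j \<in> tuples N K" "K \<le> N"
  shows "\<exists>\<sigma>. \<sigma> permutes {1..N} \<and> (\<forall>i\<in>{1..K}. \<sigma> i = j i)"
proof -
  have jm: "j ` {1..K} \<subseteq> {1..N}" and ij: "inj_on j {1..K}" using assms unfolding tuples_def by auto
  have c: "card ({1..N} - {1..K}) = card ({1..N} - j ` {1..K})"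
    using jm ij assms(2) by (simp add: card_Diff_subset card_image)
  obtain h where h: "bij_betw h ({1..N} - {1..K}) ({1..N} - j ` {1..K})"
    using finite_same_card_bij[OF _ _ c] by auto
  have b1: "bij_betw j {1..K} (j ` {1..K})" using ij by (simp add: bij_betw_imageI)
  have "bij_betw (\<lambda>x. if x \<in> {1..K} then j x else h x) ({1..K} \<union> ({1..N} - {1..K})) (j ` {1..K} \<union> ({1..N} - j ` {1..K}))"
    by (rule bij_betw_disjoint_Un[OF b1 h]) auto
  moreover have "{1..K} \<union> ({1..N} - {1..K}) = {1..N}" using assms(2) by auto
  moreover have "j ` {1..K} \<union> ({1..N} - j ` {1..K}) = {1..N}" using jm by auto
  ultimately have bb: "bij_betw (\<lambda>x. if x \<in> {1..K} then j x else h x) {1..N} {1..N}" by simp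
  define \<sigma> where "\<sigma> = (\<lambda>x. if x \<in> {1..N} then (if x \<in> {1..K} then j x else h x) else x)"
  have "bij_betw \<sigma> {1..N} {1..N}" using bb unfolding \<sigma>_def by (rule bij_betw_cong[THEN iffD1, rotated]) auto
  hence "\<sigma> permutes {1..N}" by (rule bij_imp_permutes) (auto simp: \<sigma>_def)
  moreover have "\<forall>i\<in>{1..K}. \<sigma> i = j i" using assms(2) by (auto simp: \<sigma>_def)
  ultimately show ?thesis by blast
qed

lemma finite_tuples: "finite (tuples N K)"
proof -
  have "tuples N K \<subseteq> {1..K} \<rightarrow>\<^sub>E {1..N}" unfolding tuples_def by auto
  thus ?thesis by (rule finite_subset) (simp add: finite_PiE)
qed

lemma Rperm_beh:
  assumes "\<sigma> permutes {1..N}" "E \<in> behaviors N"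
  shows "Rperm \<sigma> E \<in> behaviors N"
  using assms(2) inputs_perm[OF assms(1)] unfolding behaviors_def Rperm_def by auto

definition vec :: "nat \<Rightarrow> bool list \<Rightarrow> nat \<Rightarrow> bool" where
  "vec K ys = (\<lambda>k. if k \<in> {1..K} then ys ! (k - 1) else False)"

lemma vec_inputs: "K \<le> N \<Longrightarrow> vec K ys \<in> inputs N"
  unfolding vec_def inputs_def by auto

lemma vec_map: "k \<in> {1..K} \<Longrightarrow> vec K (map (x \<circ> j) [1..<Suc K]) k = x (j k)"
  unfolding vec_def by (auto simp del: upt_Suc simp add: nth_map)

lemma map_upt_cong: "(\<forall>i\<in>{1..K}. f i = g i) \<Longrightarrow> map f [1..<Suc K] = map g [1..<Suc K]"
  by (rule map_cong) auto

lemma sub1: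
  assumes "K \<le> N" "P \<in> CNK N K"
  shows "P \<in> conv (\<Union>\<sigma> \<in> {\<sigma>. \<sigma> permutes {1..N} \<and>
            (\<exists>g. inj_on g {1..K} \<and> g ` {1..K} \<subseteq> {1..N} \<and> (\<forall>i\<in>{1..K}. \<sigma> i = g i))}.
          Rperm \<sigma> ` embedded N K)" (is "_ \<in> conv ?U")
proof -
  let ?T = "tuples N K"
  from assms(2) obtain q Q where Pb: "P \<in> behaviors N" and q0: "\<forall>j\<in>?T. 0 \<le> q j"
    and q1: "(\<Sum>j\<in>?T. q j) = 1"
    and Qp: "\<forall>j\<in>?T. \<forall>ys. length ys = K \<longrightarrow> (\<forall>a. 0 \<le> Q j a ys) \<and> Q j False ys + Q j True ys = 1"
    and Pd: "\<forall>a. \<forall>x\<in>inputs N. P a x = (\<Sum>j\<in>?T. q j * Q j a (map (x \<circ> j) [1..<Suc K]))"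
    unfolding CNK_def by blast
  define sg where "sg j = (SOME \<sigma>. \<sigma> permutes {1..N} \<and> (\<forall>i\<in>{1..K}. \<sigma> i = j i))" for j
  have sg: "sg j permutes {1..N} \<and> (\<forall>i\<in>{1..K}. sg j i = j i)" if "j \<in> ?T" for j
    unfolding sg_def using extend_perm[OF that assms(1)] by (rule someI_ex)
  define E where "E j = (\<lambda>a y. if y \<in> inputs N then Q j a (map y [1..<Suc K]) else 0)" for j
  have Eemb: "E j \<in> embedded N K" if "j \<in> ?T" for j
  proof -
    have "E j \<in> behaviors N" using Qp that unfolding behaviors_def E_def by auto
    moreover have "E j a x = E j a y" if "x \<in> inputs N" "y \<in> inputs N" "\<forall>i\<in>{1..K}. x i = y i" for a x y
    proof -
      have m: "map x [1..<Suc K] = map y [1..<Suc K]" using that(3) by (rule map_upt_cong)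
      have "E j a x = Q j a (map x [1..<Suc K])" using that(1) unfolding E_def by simp
      also have "\<dots> = Q j a (map y [1..<Suc K])" by (simp only: m)
      also have "\<dots> = E j a y" using that(2) unfolding E_def by simp
      finally show ?thesis .
    qed
    ultimately show ?thesis unfolding embedded_def by blast
  qed
  have PsU: "Rperm (sg j) (E j) \<in> ?U" if "j \<in> ?T" for j
  proof -
    have p: "sg j permutes {1..N}" using sg[OF that] by blast
    have i1: "inj_on (sg j) {1..K}" using permutes_inj_on[OF p] .
    have i2: "sg j ` {1..K} \<subseteq> {1..N}"
    proof
      fix y assume "y \<in> sg j ` {1..K}"
      then obtain i where "i \<in> {1..K}" "y = sg j i" by blast
      thus "y \<in> {1..N}" using permutes_in_image[OF p, of i] assms(1) by auto
    qed
    have "sg j \<in> {\<sigma>. \<sigma> permutes {1..N} \<and>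
            (\<exists>g. inj_on g {1..K} \<and> g ` {1..K} \<subseteq> {1..N} \<and> (\<forall>i\<in>{1..K}. \<sigma> i = g i))}"
      using p i1 i2 by blast
    moreover have "Rperm (sg j) (E j) \<in> Rperm (sg j) ` embedded N K" using Eemb[OF that] by (rule imageI)
    ultimately show ?thesis by blast
  qed
  have Rv: "Rperm (sg j) (E j) a x = Q j a (map (x \<circ> j) [1..<Suc K])" if "j \<in> ?T" "x \<in> inputs N" for j a x
  proof -
    have p: "sg j permutes {1..N}" using sg[OF that(1)] by blast
    have xi: "x \<circ> sg j \<in> inputs N" using inputs_perm[OF p] that(2) by blast
    have m: "map (x \<circ> sg j) [1..<Suc K] = map (x \<circ> j) [1..<Suc K]"
      using sg[OF that(1)] by (intro map_upt_cong) simp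
    have "Rperm (sg j) (E j) a x = Q j a (map (x \<circ> sg j) [1..<Suc K])"
      unfolding Rperm_def E_def using xi by simp
    also have "\<dots> = Q j a (map (x \<circ> j) [1..<Suc K])" by (simp only: m)
    finally show ?thesis .
  qed
  have R0: "Rperm (sg j) (E j) a x = 0" if "j \<in> ?T" "x \<notin> inputs N" for j a x
  proof -
    have p: "sg j permutes {1..N}" using sg[OF that(1)] by blast
    have "x \<circ> sg j \<notin> inputs N" using inputs_perm[OF p] that(2) by blast
    thus ?thesis unfolding Rperm_def E_def by simp
  qed
  obtain h where h: "bij_betw h {0..<card ?T} ?T" using ex_bij_betw_nat_finite[OF finite_tuples] by blast
  have hT: "h i \<in> ?T" if "i < card ?T" for i using h that bij_betwE by fastforce
  have reidx: "(\<Sum>i<card ?T. f (h i)) = (\<Sum>j\<in>?T. f j)" for f :: "_ \<Rightarrow> real"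
    using sum.reindex_bij_betw[OF h, of f] by (simp add: atLeast0LessThan)
  show ?thesis unfolding conv_def
  proof (intro CollectI exI conjI allI impI)
    fix i assume "i < card ?T"
    thus "0 \<le> q (h i)" "Rperm (sg (h i)) (E (h i)) \<in> ?U" using hT q0 PsU by auto
  next
    show "(\<Sum>i<card ?T. q (h i)) = 1" using reidx q1 by simp
  next
    show "P = (\<lambda>a x. \<Sum>i<card ?T. q (h i) * Rperm (sg (h i)) (E (h i)) a x)"
    proof (intro ext)
      fix a x
      show "P a x = (\<Sum>i<card ?T. q (h i) * Rperm (sg (h i)) (E (h i)) a x)"
      proof (cases "x \<in> inputs N")
        case True
        have "(\<Sum>i<card ?T. q (h i) * Rperm (sg (h i)) (E (h i)) a x)
            = (\<Sum>j\<in>?T. q j * Rperm (sg j) (E j) a x)" by (rule reidx)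
        also have "\<dots> = (\<Sum>j\<in>?T. q j * Q j a (map (x \<circ> j) [1..<Suc K]))"
          by (rule sum.cong) (auto simp: Rv True)
        finally show ?thesis using Pd True by simp
      next
        case False
        have "P a x = 0" using Pb False unfolding behaviors_def by blast
        moreover have "(\<Sum>i<card ?T. q (h i) * Rperm (sg (h i)) (E (h i)) a x) = 0"
          by (rule sum.neutral) (auto simp: R0 hT False)
        ultimately show ?thesis by simp
      qed
    qed
  qed
qed


lemma sub2:
  assumes "K \<le> N" "P \<in> conv (\<Union>\<sigma> \<in> {\<sigma>. \<sigma> permutes {1..N} \<and>
            (\<exists>g. inj_on g {1..K} \<and> g ` {1..K} \<subseteq> {1..N} \<and> (\<forall>i\<in>{1..K}. \<sigma> i = g i))}.
          Rperm \<sigma> ` embedded N K)" (is "_ \<in> conv ?U")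
  shows "P \<in> CNK N K"
proof -
  let ?T = "tuples N K"
  have "\<exists>(n::nat) c Ps. (\<forall>i<n. 0 \<le> c i \<and> Ps i \<in> ?U) \<and> (\<Sum>i<n. c i) = 1 \<and> P = (\<lambda>a x. \<Sum>i<n. c i * Ps i a x)"
    using assms(2) unfolding conv_def mem_Collect_eq .
  then obtain n :: nat and c Ps where H: "(\<forall>i<n. 0 \<le> c i \<and> Ps i \<in> ?U) \<and> (\<Sum>i<n. c i) = 1 \<and> P = (\<lambda>a x. \<Sum>i<n. c i * Ps i a x)"
    by blast
  have c0: "\<forall>i<n. 0 \<le> c i" and PsU: "\<forall>i<n. Ps i \<in> ?U"
    and c1: "(\<Sum>i<n. c i) = 1" and Pd: "P = (\<lambda>a x. \<Sum>i<n. c i * Ps i a x)"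
    using H by simp_all
  have ex: "\<exists>\<sigma> E. \<sigma> permutes {1..N} \<and> E \<in> embedded N K \<and> Ps i = Rperm \<sigma> E" if "i < n" for i
  proof -
    have "Ps i \<in> ?U" using PsU that by blast
    then obtain \<sigma> where s1: "\<sigma> \<in> {\<sigma>. \<sigma> permutes {1..N} \<and>
            (\<exists>g. inj_on g {1..K} \<and> g ` {1..K} \<subseteq> {1..N} \<and> (\<forall>i\<in>{1..K}. \<sigma> i = g i))}"
       and s2: "Ps i \<in> Rperm \<sigma> ` embedded N K"
      by (rule UN_E)
    from s2 obtain F where "F \<in> embedded N K" "Ps i = Rperm \<sigma> F" by (rule imageE)
    moreover have "\<sigma> permutes {1..N}" using s1 by simp
    ultimately show ?thesis by blast
  qed
  define sg where "sg i = (SOME \<sigma>. \<exists>E. \<sigma> permutes {1..N} \<and> E \<in> embedded N K \<and> Ps i = Rperm \<sigma> E)" for i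
  define E where "E i = (SOME E. sg i permutes {1..N} \<and> E \<in> embedded N K \<and> Ps i = Rperm (sg i) E)" for i
  have sgE: "sg i permutes {1..N} \<and> E i \<in> embedded N K \<and> Ps i = Rperm (sg i) (E i)" if "i < n" for i
  proof -
    have "\<exists>E. sg i permutes {1..N} \<and> E \<in> embedded N K \<and> Ps i = Rperm (sg i) E"
      unfolding sg_def using ex[OF that] by (rule someI_ex)
    thus ?thesis unfolding E_def by (rule someI_ex)
  qed
  define jt where "jt i = restrict (sg i) {1..K}" for i
  have jtT: "jt i \<in> ?T" if "i < n" for i
  proof -
    have p: "sg i permutes {1..N}" using sgE[OF that] by blast
    have "inj_on (sg i) {1..K}" using permutes_inj_on[OF p] .
    hence i1: "inj_on (jt i) {1..K}" unfolding jt_def by (rule inj_on_restrict_iff[THEN iffD2, rotated]) simp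
    have i2: "jt i \<in> {1..K} \<rightarrow>\<^sub>E {1..N}"
    proof (rule PiE_I)
      fix k assume k: "k \<in> {1..K}"
      hence "k \<in> {1..N}" using assms(1) by simp
      hence "sg i k \<in> {1..N}" using permutes_in_image[OF p, of k] by blast
      thus "jt i k \<in> {1..N}" using k unfolding jt_def by simp
    next
      fix k assume "k \<notin> {1..K}"
      thus "jt i k = undefined" unfolding jt_def by auto
    qed
    show ?thesis unfolding tuples_def using i1 i2 by blast
  qed
  have Psb: "Ps i \<in> behaviors N" if "i < n" for i
    using sgE[OF that] Rperm_beh[of "sg i" N "E i"] unfolding embedded_def by auto
  define Qi where "Qi i a ys = E i a (vec K ys)" for i a ys
  have Qip: "0 \<le> Qi i a ys \<and> Qi i False ys + Qi i True ys = 1" if "i < n" for i a ys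
  proof -
    have "E i \<in> behaviors N" using sgE[OF that] unfolding embedded_def by blast
    thus ?thesis unfolding Qi_def behaviors_def using vec_inputs[OF assms(1)] by blast
  qed
  have PsQ: "Ps i a x = Qi i a (map (x \<circ> jt i) [1..<Suc K])" if "i < n" "x \<in> inputs N" for i a x
  proof -
    have p: "sg i permutes {1..N}" and Ee: "E i \<in> embedded N K" and Pe: "Ps i = Rperm (sg i) (E i)"
      using sgE[OF that(1)] by auto
    have xi: "x \<circ> sg i \<in> inputs N" using inputs_perm[OF p] that(2) by blast
    have ag: "\<forall>k\<in>{1..K}. (x \<circ> sg i) k = vec K (map (x \<circ> jt i) [1..<Suc K]) k"
    proof
      fix k assume k: "k \<in> {1..K}"
      have "vec K (map (x \<circ> jt i) [1..<Suc K]) k = x (jt i k)" using vec_map[OF k] .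
      also have "\<dots> = x (sg i k)" using k unfolding jt_def by simp
      finally show "(x \<circ> sg i) k = vec K (map (x \<circ> jt i) [1..<Suc K]) k" by simp
    qed
    have "Ps i a x = E i a (x \<circ> sg i)" using Pe unfolding Rperm_def by simp
    also have "\<dots> = E i a (vec K (map (x \<circ> jt i) [1..<Suc K]))"
      using Ee xi vec_inputs[OF assms(1)] ag unfolding embedded_def by blast
    finally show ?thesis unfolding Qi_def .
  qed
  define I where "I j = {i. i \<in> {..<n} \<and> jt i = j}" for j
  define q where "q j = sum c (I j)" for j
  define Q where "Q j a ys = (if q j = 0 then (if a then 1 else 0)
        else (\<Sum>i\<in>I j. c i * Qi i a ys) / q j)" for j a ys
  have finI: "finite (I j)" for j unfolding I_def by auto
  have q0: "0 \<le> q j" for j unfolding q_def I_def using c0 by (intro sum_nonneg) auto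
  have key: "q j * Q j a ys = (\<Sum>i\<in>I j. c i * Qi i a ys)" for j a ys
  proof (cases "q j = 0")
    case True
    have nn: "\<And>i. i \<in> I j \<Longrightarrow> 0 \<le> c i" using c0 unfolding I_def by auto
    have "\<forall>i\<in>I j. c i = 0" using sum_nonneg_eq_0_iff[where A="I j" and f=c] finI[of j] nn True unfolding q_def by blast
    thus ?thesis using True by simp
  next
    case False
    thus ?thesis unfolding Q_def by simp
  qed
  have sumq: "(\<Sum>j\<in>?T. q j) = 1"
    unfolding q_def I_def using sum.group[where S="{..<n}" and T="?T" and g=jt and h=c] jtT finite_tuples c1 by auto
  have Qp: "0 \<le> Q j a ys \<and> Q j False ys + Q j True ys = 1" for j a ys
  proof (cases "q j = 0")
    case True thus ?thesis unfolding Q_def by simp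
  next
    case False
    have "0 \<le> (\<Sum>i\<in>I j. c i * Qi i a ys)" using c0 Qip unfolding I_def by (intro sum_nonneg) auto
    hence a: "0 \<le> Q j a ys" unfolding Q_def using False q0[of j] by simp
    have "(\<Sum>i\<in>I j. c i * Qi i False ys) + (\<Sum>i\<in>I j. c i * Qi i True ys)
        = (\<Sum>i\<in>I j. c i * (Qi i False ys + Qi i True ys))"
      by (simp add: sum.distrib[symmetric] distrib_left)
    also have "\<dots> = q j" unfolding q_def using Qip unfolding I_def by (intro sum.cong) auto
    finally have "Q j False ys + Q j True ys = 1" unfolding Q_def using False
      by (simp add: add_divide_distrib[symmetric])
    thus ?thesis using a by simp
  qed
  have Pb: "P \<in> behaviors N"
  proof -
    have "P a x = 0" if "x \<notin> inputs N" for a x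
      unfolding Pd using Psb that unfolding behaviors_def by (auto intro!: sum.neutral)
    moreover have "0 \<le> P a x" if "x \<in> inputs N" for a x
      unfolding Pd using Psb that c0 unfolding behaviors_def by (auto intro!: sum_nonneg)
    moreover have "P False x + P True x = 1" if "x \<in> inputs N" for x
    proof -
      have "P False x + P True x = (\<Sum>i<n. c i * (Ps i False x + Ps i True x))"
        unfolding Pd by (simp add: sum.distrib[symmetric] distrib_left)
      also have "\<dots> = (\<Sum>i<n. c i)" using Psb that unfolding behaviors_def by (intro sum.cong) auto
      finally show ?thesis using c1 by simp
    qed
    ultimately show ?thesis unfolding behaviors_def by blast
  qed
  have Pdec: "P a x = (\<Sum>j\<in>?T. q j * Q j a (map (x \<circ> j) [1..<Suc K]))" if "x \<in> inputs N" for a x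
  proof -
    have "P a x = (\<Sum>i<n. c i * Qi i a (map (x \<circ> jt i) [1..<Suc K]))"
      unfolding Pd using PsQ that by simp
    also have "\<dots> = (\<Sum>j\<in>?T. \<Sum>i\<in>I j. c i * Qi i a (map (x \<circ> j) [1..<Suc K]))"
    proof -
      have img: "jt ` {..<n} \<subseteq> ?T" using jtT by auto
      show ?thesis
        using sum.group[OF finite_lessThan finite_tuples img, of "\<lambda>i. c i * Qi i a (map (x \<circ> jt i) [1..<Suc K])"]
        unfolding I_def by simp
    qed
    also have "\<dots> = (\<Sum>j\<in>?T. q j * Q j a (map (x \<circ> j) [1..<Suc K]))"
      by (simp only: key)
    finally show ?thesis .
  qed
  have X: "(\<forall>j\<in>?T. 0 \<le> q j) \<and> (\<Sum>j\<in>?T. q j) = 1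
    \<and> (\<forall>j\<in>?T. \<forall>ys. length ys = K \<longrightarrow>
          (\<forall>a. 0 \<le> Q j a ys) \<and> Q j False ys + Q j True ys = 1)
    \<and> (\<forall>a. \<forall>x\<in>inputs N.
          P a x = (\<Sum>j\<in>?T. q j * Q j a (map (x \<circ> j) [1..<Suc K])))"
    using q0 sumq Qp Pdec by blast
  show ?thesis unfolding CNK_def
    using Pb X by blast
qed

theorem lemma1:
  fixes N K :: nat
  assumes "1 \<le> K" and "K \<le> N"
  shows "CNK N K = conv (\<Union>\<sigma> \<in> {\<sigma>. \<sigma> permutes {1..N} \<and>
            (\<exists>g. inj_on g {1..K} \<and> g ` {1..K} \<subseteq> {1..N} \<and> (\<forall>i\<in>{1..K}. \<sigma> i = g i))}.
          Rperm \<sigma> ` embedded N K)"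
proof
  show "CNK N K \<subseteq> conv (\<Union>\<sigma> \<in> {\<sigma>. \<sigma> permutes {1..N} \<and>
            (\<exists>g. inj_on g {1..K} \<and> g ` {1..K} \<subseteq> {1..N} \<and> (\<forall>i\<in>{1..K}. \<sigma> i = g i))}.
          Rperm \<sigma> ` embedded N K)"
    using sub1[OF assms(2)] by blast
  show "conv (\<Union>\<sigma> \<in> {\<sigma>. \<sigma> permutes {1..N} \<and>
            (\<exists>g. inj_on g {1..K} \<and> g ` {1..K} \<subseteq> {1..N} \<and> (\<forall>i\<in>{1..K}. \<sigma> i = g i))}.
          Rperm \<sigma> ` embedded N K) \<subseteq> CNK N K"
    using sub2[OF assms(2)] by blast
qed

end
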